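(* Let $k\ge1$ and let $(A,t)$ be a nontrivial $\mathcal{C}_k$-algebra. The following are equivalent: (i) $(A,t)$ is a simple algebra; (ii) for every $a\in A$ with $a\neq1$, $\bigwedge_{j=1}^{k}t^j(\triangle a)=0$; (iii) $K(A)=\{0,1\}$, where $K(A)=\{x\in A: t(x)=x=\nabla x\}$.
   Context: A modal pseudocomplemented De Morgan algebra ($mpM$-algebra) is an algebra $\langle A,\wedge,\vee,\sim,{}^\ast,0,1\rangle$ such that $\langle A,\wedge,\vee,\sim,0,1\rangle$ is a De Morgan algebra (bounded distributive lattice with $\sim\sim x=x$, $\sim(x\vee y)=\sim x\wedge\sim y$), $x^\ast$ is the pseudocomplement of $x$, and $x\vee\sim x\le x\vee x^\ast$. Put $\nabla x=\sim(\sim x\wedge x^\ast)$, $\triangle x=\sim\nabla\sim x$. A $\mathcal{C}_k$-algebra ($k\ge1$) is a pair $(A,t)$ with $A$ an $mpM$-algebra and $t$ an $mpM$-automorphism of $A$ with $t^k=\mathrm{id}$; simplicity refers to the signature $(\wedge,\vee,\sim,{}^\ast,t,0,1)$. *)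

theory Defs
  imports Main
begin

text \<open>An algebra of signature (meet, join, neg, pc, 0, 1) whose universe is the whole type 'a.\<close>

record 'a mpm_ops =
  mt  :: "'a \<Rightarrow> 'a \<Rightarrow> 'a"
  jn  :: "'a \<Rightarrow> 'a \<Rightarrow> 'a"
  ng  :: "'a \<Rightarrow> 'a"
  pc  :: "'a \<Rightarrow> 'a"
  bt  :: "'a"
  tp  :: "'a"

definition leq :: "'a mpm_ops \<Rightarrow> 'a \<Rightarrow> 'a \<Rightarrow> bool" where
  "leq A x y \<longleftrightarrow> mt A x y = x"

definition bdl :: "'a mpm_ops \<Rightarrow> bool" where
  "bdl A \<longleftrightarrow>
     (\<forall>x y z. mt A x (mt A y z) = mt A (mt A x y) z) \<and>
     (\<forall>x y z. jn A x (jn A y z) = jn A (jn A x y) z) \<and>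
     (\<forall>x y. mt A x y = mt A y x) \<and>
     (\<forall>x y. jn A x y = jn A y x) \<and>
     (\<forall>x y. mt A x (jn A x y) = x) \<and>
     (\<forall>x y. jn A x (mt A x y) = x) \<and>
     (\<forall>x y z. mt A x (jn A y z) = jn A (mt A x y) (mt A x z)) \<and>
     (\<forall>x. mt A x (bt A) = bt A) \<and>
     (\<forall>x. jn A x (tp A) = tp A)"

definition demorgan_alg :: "'a mpm_ops \<Rightarrow> bool" where
  "demorgan_alg A \<longleftrightarrow> bdl A \<and>
     (\<forall>x. ng A (ng A x) = x) \<and>
     (\<forall>x y. ng A (jn A x y) = mt A (ng A x) (ng A y))"

definition is_pseudocomplement :: "'a mpm_ops \<Rightarrow> bool" where
  "is_pseudocomplement A \<longleftrightarrow>
     (\<forall>x. mt A x (pc A x) = bt A \<and> (\<forall>y. mt A x y = bt A \<longrightarrow> leq A y (pc A x)))"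

definition mpM_alg :: "'a mpm_ops \<Rightarrow> bool" where
  "mpM_alg A \<longleftrightarrow> demorgan_alg A \<and> is_pseudocomplement A \<and>
     (\<forall>x. leq A (jn A x (ng A x)) (jn A x (pc A x)))"

definition nabla :: "'a mpm_ops \<Rightarrow> 'a \<Rightarrow> 'a" where
  "nabla A x = ng A (mt A (ng A x) (pc A x))"

definition delta :: "'a mpm_ops \<Rightarrow> 'a \<Rightarrow> 'a" where
  "delta A x = ng A (nabla A (ng A x))"

definition mpM_automorphism :: "'a mpm_ops \<Rightarrow> ('a \<Rightarrow> 'a) \<Rightarrow> bool" where
  "mpM_automorphism A t \<longleftrightarrow> bij t \<and>
     (\<forall>x y. t (mt A x y) = mt A (t x) (t y)) \<and>
     (\<forall>x y. t (jn A x y) = jn A (t x) (t y)) \<and>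
     (\<forall>x. t (ng A x) = ng A (t x)) \<and>
     (\<forall>x. t (pc A x) = pc A (t x)) \<and>
     t (bt A) = bt A \<and> t (tp A) = tp A"

definition Ck_alg :: "nat \<Rightarrow> 'a mpm_ops \<Rightarrow> ('a \<Rightarrow> 'a) \<Rightarrow> bool" where
  "Ck_alg k A t \<longleftrightarrow> k \<ge> 1 \<and> mpM_alg A \<and> mpM_automorphism A t \<and> (t ^^ k) = id"

definition Ck_congruence :: "'a mpm_ops \<Rightarrow> ('a \<Rightarrow> 'a) \<Rightarrow> 'a rel \<Rightarrow> bool" where
  "Ck_congruence A t \<theta> \<longleftrightarrow> equiv UNIV \<theta> \<and>
     (\<forall>x y u v. (x, y) \<in> \<theta> \<longrightarrow> (u, v) \<in> \<theta> \<longrightarrow> (mt A x u, mt A y v) \<in> \<theta>) \<and>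
     (\<forall>x y u v. (x, y) \<in> \<theta> \<longrightarrow> (u, v) \<in> \<theta> \<longrightarrow> (jn A x u, jn A y v) \<in> \<theta>) \<and>
     (\<forall>x y. (x, y) \<in> \<theta> \<longrightarrow> (ng A x, ng A y) \<in> \<theta>) \<and>
     (\<forall>x y. (x, y) \<in> \<theta> \<longrightarrow> (pc A x, pc A y) \<in> \<theta>) \<and>
     (\<forall>x y. (x, y) \<in> \<theta> \<longrightarrow> (t x, t y) \<in> \<theta>)"

definition Ck_simple :: "'a mpm_ops \<Rightarrow> ('a \<Rightarrow> 'a) \<Rightarrow> bool" where
  "Ck_simple A t \<longleftrightarrow> (\<exists>x y::'a. x \<noteq> y) \<and>
     (\<forall>\<theta>. Ck_congruence A t \<theta> \<longrightarrow> \<theta> = Id \<or> \<theta> = UNIV)"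

fun big_meet :: "'a mpm_ops \<Rightarrow> (nat \<Rightarrow> 'a) \<Rightarrow> nat \<Rightarrow> 'a" where
  "big_meet A f 0 = tp A"
| "big_meet A f (Suc n) = mt A (big_meet A f n) (f (Suc n))"

definition K_set :: "'a mpm_ops \<Rightarrow> ('a \<Rightarrow> 'a) \<Rightarrow> 'a set" where
  "K_set A t = {x. t x = x \<and> x = nabla A x}"

end

theory Submission imports Defs begin

locale mpm =
  fixes A :: "'a mpm_ops"
  assumes alg: "mpM_alg A"
begin

lemma ax:
  "\<And>x y z. mt A x (mt A y z) = mt A (mt A x y) z"
  "\<And>x y z. jn A x (jn A y z) = jn A (jn A x y) z"
  "\<And>x y. mt A x y = mt A y x"
  "\<And>x y. jn A x y = jn A y x"
  "\<And>x y. mt A x (jn A x y) = x"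
  "\<And>x y. jn A x (mt A x y) = x"
  "\<And>x y z. mt A x (jn A y z) = jn A (mt A x y) (mt A x z)"
  "\<And>x. mt A x (bt A) = bt A"
  "\<And>x. jn A x (tp A) = tp A"
  "\<And>x. ng A (ng A x) = x"
  "\<And>x y. ng A (jn A x y) = mt A (ng A x) (ng A y)"
  "\<And>x. mt A x (pc A x) = bt A"
  "\<And>x y. mt A x y = bt A \<Longrightarrow> leq A y (pc A x)"
  "\<And>x. leq A (jn A x (ng A x)) (jn A x (pc A x))"
proof -
  have B: "bdl A" and N1: "\<forall>x. ng A (ng A x) = x" and N2: "\<forall>x y. ng A (jn A x y) = mt A (ng A x) (ng A y)"
    and P: "is_pseudocomplement A" and M: "\<forall>x. leq A (jn A x (ng A x)) (jn A x (pc A x))"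
    using alg unfolding mpM_alg_def demorgan_alg_def by simp_all
  note B' = B[unfolded bdl_def]
  note P' = P[unfolded is_pseudocomplement_def]
  show "\<And>x y z. mt A x (mt A y z) = mt A (mt A x y) z" using B' by blast
  show "\<And>x y z. jn A x (jn A y z) = jn A (jn A x y) z" using B' by blast
  show "\<And>x y. mt A x y = mt A y x" using B' by blast
  show "\<And>x y. jn A x y = jn A y x" using B' by blast
  show "\<And>x y. mt A x (jn A x y) = x" using B' by blast
  show "\<And>x y. jn A x (mt A x y) = x" using B' by blast
  show "\<And>x y z. mt A x (jn A y z) = jn A (mt A x y) (mt A x z)" using B' by blast
  show "\<And>x. mt A x (bt A) = bt A" using B' by blast
  show "\<And>x. jn A x (tp A) = tp A" using B' by blast
  show "\<And>x. ng A (ng A x) = x" using N1 by blast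
  show "\<And>x y. ng A (jn A x y) = mt A (ng A x) (ng A y)" using N2 by blast
  show "\<And>x. mt A x (pc A x) = bt A" using P' by blast
  show "\<And>x y. mt A x y = bt A \<Longrightarrow> leq A y (pc A x)" using P' by blast
  show "\<And>x. leq A (jn A x (ng A x)) (jn A x (pc A x))" using M by blast
qed

lemma idem: "mt A x x = x" by (metis ax(5) ax(6))

lemma jn_le: assumes "mt A y x = y" "mt A z x = z" shows "mt A (jn A y z) x = jn A y z"
proof -
    have "mt A (jn A y z) x = mt A x (jn A y z)" by (rule ax(3))
    also have "\<dots> = jn A (mt A x y) (mt A x z)" by (rule ax(7))
    also have "\<dots> = jn A y z" using assms by (simp add: ax(3))
    finally show ?thesis .
qed

sublocale L: distrib_lattice "mt A" "leq A" "\<lambda>x y. leq A x y \<and> x \<noteq> y" "jn A"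
proof
  fix x y z
  show "(leq A x y \<and> x \<noteq> y) = (leq A x y \<and> \<not> leq A y x)" unfolding leq_def by (metis ax(3))
  show "leq A x x" unfolding leq_def by (rule idem)
  show "leq A x y \<Longrightarrow> leq A y z \<Longrightarrow> leq A x z" unfolding leq_def by (metis ax(1))
  show "leq A x y \<Longrightarrow> leq A y x \<Longrightarrow> x = y" unfolding leq_def by (metis ax(3))
  show "leq A (mt A x y) x" unfolding leq_def by (metis ax(1) ax(3) idem)
  show "leq A (mt A x y) y" unfolding leq_def by (metis ax(1) idem)
  show "leq A x y \<Longrightarrow> leq A x z \<Longrightarrow> leq A x (mt A y z)" unfolding leq_def by (metis ax(1))
  show "leq A x (jn A x y)" unfolding leq_def by (rule ax(5))
  show "leq A y (jn A x y)" unfolding leq_def by (metis ax(4) ax(5))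
  show "leq A y x \<Longrightarrow> leq A z x \<Longrightarrow> leq A (jn A y z) x" unfolding leq_def by (rule jn_le)
  have "mt A (jn A x y) (jn A x z) = jn A (mt A (jn A x y) x) (mt A (jn A x y) z)" by (rule ax(7))
  also have "mt A (jn A x y) x = x" by (metis ax(3) ax(5))
  also have "mt A (jn A x y) z = jn A (mt A z x) (mt A z y)" by (metis ax(3) ax(7))
  also have "jn A x (jn A (mt A z x) (mt A z y)) = jn A (jn A x (mt A x z)) (mt A y z)" by (metis ax(2) ax(3))
  also have "jn A x (mt A x z) = x" by (rule ax(6))
  finally show "jn A x (mt A y z) = mt A (jn A x y) (jn A x z)" by simp
qed


lemma le_antisym: "leq A x y \<Longrightarrow> leq A y x \<Longrightarrow> x = y" unfolding leq_def by (metis ax(3))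
lemma le_def': "leq A x y \<longleftrightarrow> mt A x y = x" by (simp add: leq_def)
lemma nn[simp]: "ng A (ng A x) = x" by (rule ax(10))
lemma dm_j: "ng A (jn A x y) = mt A (ng A x) (ng A y)" by (rule ax(11))
lemma dm_m: "ng A (mt A x y) = jn A (ng A x) (ng A y)"
  by (metis ax(10) ax(11))
lemma ng_mono: "leq A x y \<Longrightarrow> leq A (ng A y) (ng A x)"
  by (metis L.sup.orderE L.sup.orderI dm_j ax(3) L.inf.orderI leq_def)
lemma ng_inj: "ng A x = ng A y \<Longrightarrow> x = y" by (metis nn)
lemma bot_le: "leq A (bt A) x" by (metis ax(3) ax(8) leq_def)
lemma le_top: "leq A x (tp A)" by (metis ax(5) ax(9) leq_def)
lemma bot_mt[simp]: "mt A (bt A) x = bt A" "mt A x (bt A) = bt A" using ax(3) ax(8) by metis+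
lemma top_mt[simp]: "mt A (tp A) x = x" "mt A x (tp A) = x" using le_top leq_def ax(3) by metis+
lemma top_jn[simp]: "jn A (tp A) x = tp A" "jn A x (tp A) = tp A" using ax(4) ax(9) by metis+
lemma bot_jn[simp]: "jn A (bt A) x = x" "jn A x (bt A) = x" using ax(4) ax(6) bot_mt by metis+
lemma ng1[simp]: "ng A (tp A) = bt A"
  by (metis le_antisym bot_le dm_j le_top ng_mono nn top_jn(2))
lemma ng0[simp]: "ng A (bt A) = tp A" by (metis ng1 nn)
lemma pc_meet[simp]: "mt A x (pc A x) = bt A" by (rule ax(12))
lemma pc_max: "mt A x y = bt A \<Longrightarrow> leq A y (pc A x)" by (rule ax(13))
lemma pc0[simp]: "pc A (bt A) = tp A" by (metis le_antisym bot_mt(1) le_top pc_max)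
lemma pc1[simp]: "pc A (tp A) = bt A" by (metis pc_meet top_mt(1))
lemma Mp: "leq A (ng A y) (jn A y (pc A y))" using ax(14) L.le_sup_iff by blast
lemma D1: "leq A (mt A (ng A y) (ng A (pc A y))) y"
  by (metis Mp dm_j ng_mono nn)
lemma nabla_eq: "nabla A x = jn A x (ng A (pc A x))" by (simp add: nabla_def dm_m)
lemma delta_eq: "delta A x = mt A x (pc A (ng A x))" by (simp add: delta_def nabla_def)

definition bo where "bo b \<longleftrightarrow> mt A b (ng A b) = bt A \<and> jn A b (ng A b) = tp A"

lemma bo_ng: "bo b \<Longrightarrow> bo (ng A b)" unfolding bo_def by (metis ax(3) ax(4) nn)
lemma bo_mt: assumes "bo b" "bo c" shows "bo (mt A b c)"
proof -
  have b: "mt A b (ng A b) = bt A" "jn A b (ng A b) = tp A" and c: "mt A c (ng A c) = bt A" "jn A c (ng A c) = tp A"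
    using assms unfolding bo_def by auto
  have 1: "mt A (mt A b c) (jn A (ng A b) (ng A c)) = jn A (mt A c (mt A b (ng A b))) (mt A b (mt A c (ng A c)))"
    by (metis L.inf_sup_distrib1 L.inf.assoc L.inf.commute L.inf.left_commute)
  have 2: "jn A (mt A b c) (jn A (ng A b) (ng A c)) = mt A (jn A (ng A c) (jn A b (ng A b))) (jn A (ng A b) (jn A c (ng A c)))"
    by (metis L.sup_inf_distrib2 L.sup.assoc L.sup.commute L.sup.left_commute)
  show ?thesis unfolding bo_def dm_m using 1 2 b c by simp
qed
lemma bo_top: "bo (tp A)" by (simp add: bo_def)
lemma bo_bot: "bo (bt A)" by (simp add: bo_def)
lemma bo_pc: assumes "bo b" shows "pc A b = ng A b"
proof -
  have b: "mt A b (ng A b) = bt A" "jn A b (ng A b) = tp A" using assms unfolding bo_def by auto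
  have "leq A (ng A b) (pc A b)" using b(1) by (rule pc_max)
  moreover have "pc A b = mt A (pc A b) (jn A b (ng A b))" using b(2) by simp
  then have "pc A b = mt A (pc A b) (ng A b)"
    by (metis L.inf_sup_distrib1 L.inf.commute bot_jn(1) pc_meet)
  then have "leq A (pc A b) (ng A b)" by (simp add: leq_def)
  ultimately show ?thesis by (rule le_antisym[rotated])
qed
lemma nabla_bo: "bo (nabla A y)"
proof -
  have e: "ng A (nabla A y) = mt A (ng A y) (pc A y)" by (simp add: nabla_def)
  have "mt A (nabla A y) (ng A (nabla A y)) = jn A (mt A y (mt A (ng A y) (pc A y))) (mt A (ng A (pc A y)) (mt A (ng A y) (pc A y)))"
    unfolding nabla_eq dm_j nn by (rule L.inf_sup_distrib2)
  moreover have "mt A y (mt A (ng A y) (pc A y)) = bt A"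
    by (metis L.inf.left_commute pc_meet bot_mt(2))
  moreover have "mt A (ng A (pc A y)) (mt A (ng A y) (pc A y)) = bt A"
  proof -
    have "leq A (mt A (ng A y) (ng A (pc A y))) y" by (rule D1)
    hence "leq A (mt A (mt A (ng A y) (ng A (pc A y))) (pc A y)) (mt A y (pc A y))" by (rule L.inf_mono) simp
    hence "leq A (mt A (ng A (pc A y)) (mt A (ng A y) (pc A y))) (bt A)"
      by (metis L.inf.assoc L.inf.commute pc_meet)
    thus ?thesis by (metis le_antisym bot_le)
  qed
  ultimately have m: "mt A (nabla A y) (ng A (nabla A y)) = bt A" by simp
  hence "jn A (nabla A y) (ng A (nabla A y)) = tp A"
    by (metis dm_m ng0 nn L.inf.commute L.sup.commute)
  with m show ?thesis unfolding bo_def by simp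
qed
lemma delta_bo: "bo (delta A x)" by (metis bo_ng delta_def nabla_bo)
lemma bo_nabla: "bo b \<Longrightarrow> nabla A b = b" by (simp add: bo_pc nabla_eq)
lemma delta_le: "leq A (delta A x) x" by (simp add: delta_eq)
lemma delta_top: "delta A x = tp A \<Longrightarrow> x = tp A" by (metis le_antisym delta_le le_top)
lemma decomp: "x = jn A (mt A x (ng A x)) (delta A x)"
proof -
  have "leq A x (jn A (ng A x) (pc A (ng A x)))" using Mp[of "ng A x"] by simp
  hence "x = mt A x (jn A (ng A x) (pc A (ng A x)))" by (simp add: leq_def)
  also have "\<dots> = jn A (mt A x (ng A x)) (delta A x)" by (simp add: delta_eq L.inf_sup_distrib1)
  finally show ?thesis .
qed
lemma decomp2: "x = mt A (jn A x (ng A x)) (nabla A x)"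
proof -
  have "ng A x = jn A (mt A (ng A x) x) (delta A (ng A x))" using decomp[of "ng A x"] by simp
  hence "x = ng A (jn A (mt A (ng A x) x) (delta A (ng A x)))" by (metis nn)
  also have "\<dots> = mt A (jn A x (ng A x)) (nabla A x)" by (simp add: dm_j dm_m delta_def L.sup.commute L.inf.commute)
  finally show ?thesis .
qed
lemma determ: assumes "leq A u v" "delta A u = delta A v" "nabla A u = nabla A v" shows "u = v"
proof -
  have "leq A (ng A v) (ng A u)" using assms(1) by (rule ng_mono)
  have a: "leq A (mt A v (ng A v)) (jn A u (ng A u))"
    by (meson L.inf_le2 L.le_supI2 L.order_trans \<open>leq A (ng A v) (ng A u)\<close>)
  have b: "leq A (mt A v (ng A v)) (nabla A u)"
    by (metis L.inf_le1 L.order_trans assms(3) decomp2 L.inf_le2)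
  have "leq A (mt A v (ng A v)) u" using a b decomp2[of u] by (metis L.le_inf_iff)
  moreover have "leq A (delta A v) u" using assms(2) delta_le by metis
  ultimately have "leq A v u" using decomp[of v] by (metis L.le_sup_iff)
  with assms(1) show ?thesis by (rule le_antisym)
qed
lemma pc_mt_bo: assumes "bo m" shows "pc A (mt A x m) = jn A (pc A x) (ng A m)"
proof -
  have b: "mt A m (ng A m) = bt A" "jn A m (ng A m) = tp A" using assms unfolding bo_def by auto
  have "mt A (mt A x m) (jn A (pc A x) (ng A m)) = jn A (mt A m (mt A x (pc A x))) (mt A x (mt A m (ng A m)))"
    by (metis L.inf_sup_distrib1 L.inf.assoc L.inf.commute L.inf.left_commute)
  hence "mt A (mt A x m) (jn A (pc A x) (ng A m)) = bt A" using b by simp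
  hence 1: "leq A (jn A (pc A x) (ng A m)) (pc A (mt A x m))" by (rule pc_max)
  define z where "z = pc A (mt A x m)"
  have "mt A x (mt A z m) = bt A" unfolding z_def by (metis L.inf.assoc L.inf.commute pc_meet)
  hence "leq A (mt A z m) (pc A x)" by (rule pc_max)
  moreover have "z = jn A (mt A z m) (mt A z (ng A m))" using b(2) by (metis L.inf_sup_distrib1 top_mt(2))
  ultimately have "leq A z (jn A (pc A x) (ng A m))"
    by (metis L.inf_le2 L.sup_mono)
  with 1 show ?thesis unfolding z_def by (rule le_antisym[rotated])
qed

lemma pc_anti: "leq A x y \<Longrightarrow> leq A (pc A y) (pc A x)"
proof -
  assume "leq A x y"
  hence "leq A (mt A x (pc A y)) (mt A y (pc A y))" by (rule L.inf_mono) simp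
  hence "mt A x (pc A y) = bt A" by (metis le_antisym bot_le pc_meet)
  thus ?thesis by (rule pc_max)
qed
lemma nabla_mono: "leq A x y \<Longrightarrow> leq A (nabla A x) (nabla A y)"
  unfolding nabla_eq by (meson L.sup_mono ng_mono pc_anti)
lemma delta_mono: "leq A x y \<Longrightarrow> leq A (delta A x) (delta A y)"
  unfolding delta_eq by (meson L.inf_mono ng_mono pc_anti)
lemma bo_sep: assumes "bo p" "bo q" "leq A p q" "p \<noteq> q" shows "jn A p (ng A q) \<noteq> tp A"
proof
  assume h: "jn A p (ng A q) = tp A"
  have q: "mt A q (ng A q) = bt A" using assms(2) unfolding bo_def by auto
  have "q = mt A q (jn A p (ng A q))" using h by simp
  also have "\<dots> = mt A q p" using q by (simp add: L.inf_sup_distrib1)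
  also have "\<dots> = p" using assms(3) by (metis L.inf.commute leq_def)
  finally show False using assms(4) by simp
qed
lemma bo_jn_ng: "bo q \<Longrightarrow> jn A q (ng A q) = tp A" unfolding bo_def by auto

lemma bm_bo: "(\<And>j. 1 \<le> j \<Longrightarrow> j \<le> n \<Longrightarrow> bo (f j)) \<Longrightarrow> bo (big_meet A f n)"
  by (induction n) (auto simp: bo_top intro!: bo_mt)
lemma bm_le: "1 \<le> j \<Longrightarrow> j \<le> n \<Longrightarrow> leq A (big_meet A f n) (f j)"
proof (induction n)
  case 0 then show ?case by simp
next
  case (Suc n)
  show ?case
  proof (cases "j = Suc n")
    case True then show ?thesis by simp
  next
    case False
    then have "leq A (big_meet A f n) (f j)" using Suc by simp
    then show ?thesis by (simp add: L.le_infI1)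
  qed
qed
lemma bm_shift: "mt A (big_meet A (\<lambda>j. f (Suc j)) n) (f 1) = big_meet A f (Suc n)"
proof (induction n)
  case 0 then show ?case by simp
next
  case (Suc n)
  have "mt A (big_meet A (\<lambda>j. f (Suc j)) (Suc n)) (f 1) = mt A (mt A (big_meet A (\<lambda>j. f (Suc j)) n) (f 1)) (f (Suc (Suc n)))"
    by (simp add: L.inf.assoc L.inf.commute L.inf.left_commute)
  then show ?case using Suc by simp
qed
lemma bm_const: "1 \<le> n \<Longrightarrow> big_meet A (\<lambda>j. x) n = x"
proof (induction n)
  case 0 then show ?case by simp
next
  case (Suc n) then show ?case by (cases n) (auto simp: idem)
qed

end

locale ck = mpm A for A :: "'a mpm_ops" +
  fixes t :: "'a \<Rightarrow> 'a" and k :: nat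
  assumes ck: "Ck_alg k A t"
begin

lemma k1: "1 \<le> k" using ck unfolding Ck_alg_def by auto
lemma tk: "t ^^ k = id" using ck unfolding Ck_alg_def by auto
lemma tax: "\<And>x y. t (mt A x y) = mt A (t x) (t y)" "\<And>x y. t (jn A x y) = jn A (t x) (t y)"
  "\<And>x. t (ng A x) = ng A (t x)" "\<And>x. t (pc A x) = pc A (t x)" "t (bt A) = bt A" "t (tp A) = tp A"
  using ck unfolding Ck_alg_def mpM_automorphism_def by auto

lemma tp_mt: "(t^^j) (mt A x y) = mt A ((t^^j) x) ((t^^j) y)" by (induction j) (auto simp: tax)
lemma tp_ng: "(t^^j) (ng A x) = ng A ((t^^j) x)" by (induction j) (auto simp: tax)
lemma tp_pc: "(t^^j) (pc A x) = pc A ((t^^j) x)" by (induction j) (auto simp: tax)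
lemma tp_jn: "(t^^j) (jn A x y) = jn A ((t^^j) x) ((t^^j) y)" by (induction j) (auto simp: tax)
lemma tp_bt: "(t^^j) (bt A) = bt A" by (induction j) (auto simp: tax)
lemma tp_tp: "(t^^j) (tp A) = tp A" by (induction j) (auto simp: tax)
lemma tp_bo: "bo b \<Longrightarrow> bo ((t^^j) b)"
  unfolding bo_def by (metis tp_mt tp_ng tp_jn tp_bt tp_tp)
lemma tp_delta: "(t^^j) (delta A x) = delta A ((t^^j) x)"
  by (simp add: delta_eq tp_mt tp_pc tp_ng)
lemma t_nabla: "t (nabla A x) = nabla A (t x)"
  by (simp add: nabla_eq tax)

definition mm where "mm a = big_meet A (\<lambda>j. (t ^^ j) (delta A a)) k"

lemma mm_bo: "bo (mm a)" unfolding mm_def by (rule bm_bo) (simp add: tp_bo delta_bo)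
lemma t_bm: "t (big_meet A f n) = big_meet A (\<lambda>j. t (f j)) n" by (induction n) (auto simp: tax)
lemma mm_fix: "t (mm a) = mm a"
proof -
  obtain n where n: "k = Suc n" using k1 by (cases k) auto
  define f where "f = (\<lambda>j. (t ^^ j) (delta A a))"
  have "t (mm a) = big_meet A (\<lambda>j. f (Suc j)) k" unfolding mm_def t_bm f_def by simp
  also have "\<dots> = mt A (big_meet A (\<lambda>j. f (Suc j)) n) (f (Suc k))" using n by simp
  also have "f (Suc k) = f 1" unfolding f_def using tk by simp
  also have "mt A (big_meet A (\<lambda>j. f (Suc j)) n) (f 1) = big_meet A f k" using n bm_shift by simp
  finally show ?thesis unfolding mm_def f_def .
qed
lemma mm_top: "mm a = tp A \<Longrightarrow> a = tp A"
proof -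
  assume h: "mm a = tp A"
  have "leq A (mm a) ((t^^k) (delta A a))" unfolding mm_def by (rule bm_le) (use k1 in auto)
  hence "delta A a = tp A" using h tk by (metis le_antisym id_apply le_top)
  thus ?thesis by (rule delta_top)
qed


definition cond2 where "cond2 \<longleftrightarrow> (\<forall>a. a \<noteq> tp A \<longrightarrow> big_meet A (\<lambda>j. (t ^^ j) (delta A a)) k = bt A)"

lemma two_three: "cond2 \<longleftrightarrow> K_set A t = {bt A, tp A}"
proof
  assume c: cond2
  show "K_set A t = {bt A, tp A}"
  proof
    show "{bt A, tp A} \<subseteq> K_set A t" unfolding K_set_def
      using bo_nabla[OF bo_bot] bo_nabla[OF bo_top] tax by auto
    show "K_set A t \<subseteq> {bt A, tp A}"
    proof
      fix x assume "x \<in> K_set A t"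
      hence x: "t x = x" "nabla A x = x" unfolding K_set_def by auto
      have bx: "bo x" by (metis x(2) nabla_bo)
      have dx: "delta A x = x" using bo_nabla[OF bo_ng[OF bx]] by (simp add: delta_def)
      have tj: "(t^^j) x = x" for j by (induction j) (auto simp: x)
      show "x \<in> {bt A, tp A}"
      proof (cases "x = tp A")
        case False
        then have "big_meet A (\<lambda>j. (t ^^ j) (delta A x)) k = bt A" using c unfolding cond2_def by auto
        then have "x = bt A" using dx tj bm_const[OF k1, of x] by simp
        then show ?thesis by simp
      qed simp
    qed
  qed
next
  assume K: "K_set A t = {bt A, tp A}"
  show cond2 unfolding cond2_def
  proof (intro allI impI)
    fix a assume a: "a \<noteq> tp A"
    have "mm a \<in> K_set A t" unfolding K_set_def using mm_fix bo_nabla[OF mm_bo] by auto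
    with K have "mm a = bt A \<or> mm a = tp A" by auto
    with mm_top a show "big_meet A (\<lambda>j. (t ^^ j) (delta A a)) k = bt A" unfolding mm_def by auto
  qed
qed

lemma one_two: assumes "Ck_simple A t" shows cond2
  unfolding cond2_def
proof (intro allI impI)
  fix a assume a: "a \<noteq> tp A"
  define m where "m = mm a"
  have bm: "bo m" unfolding m_def by (rule mm_bo)
  have tm: "t m = m" unfolding m_def by (rule mm_fix)
  have mnb: "mt A m (ng A m) = bt A" using bm unfolding bo_def by auto
  define \<theta> where "\<theta> = {(x, y). mt A x m = mt A y m}"
  have cong: "Ck_congruence A t \<theta>"
    unfolding Ck_congruence_def
  proof (intro conjI allI impI)
    show "equiv UNIV \<theta>" unfolding \<theta>_def equiv_def refl_on_def sym_def trans_def by auto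
    fix x y u v assume "(x,y) \<in> \<theta>" "(u,v) \<in> \<theta>"
    hence h: "mt A x m = mt A y m" "mt A u m = mt A v m" unfolding \<theta>_def by auto
    have "mt A (mt A x u) m = mt A (mt A x m) (mt A u m)"
      by (metis L.inf.assoc L.inf.commute L.inf.left_commute idem)
    moreover have "mt A (mt A y v) m = mt A (mt A y m) (mt A v m)"
      by (metis L.inf.assoc L.inf.commute L.inf.left_commute idem)
    ultimately show "(mt A x u, mt A y v) \<in> \<theta>" using h unfolding \<theta>_def by simp
    have "mt A (jn A x u) m = jn A (mt A x m) (mt A u m)" "mt A (jn A y v) m = jn A (mt A y m) (mt A v m)"
      by (simp_all add: L.inf_sup_distrib2)
    then show "(jn A x u, jn A y v) \<in> \<theta>" using h unfolding \<theta>_def by simp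
  next
    fix x y assume "(x,y) \<in> \<theta>"
    hence h: "mt A x m = mt A y m" unfolding \<theta>_def by auto
    have e: "mt A (ng A z) m = mt A (ng A (mt A z m)) m" for z
    proof -
      have "mt A (ng A (mt A z m)) m = jn A (mt A (ng A z) m) (mt A (ng A m) m)"
        by (simp add: dm_m L.inf_sup_distrib2)
      also have "mt A (ng A m) m = bt A" using mnb by (simp add: L.inf.commute)
      finally show ?thesis by simp
    qed
    show "(ng A x, ng A y) \<in> \<theta>" unfolding \<theta>_def using e[of x] e[of y] h by simp
    have e2: "mt A (pc A z) m = mt A (pc A (mt A z m)) m" for z
    proof -
      have "mt A (pc A (mt A z m)) m = jn A (mt A (pc A z) m) (mt A (ng A m) m)"
        by (simp add: pc_mt_bo[OF bm] L.inf_sup_distrib2)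
      also have "mt A (ng A m) m = bt A" using mnb by (simp add: L.inf.commute)
      finally show ?thesis by simp
    qed
    show "(pc A x, pc A y) \<in> \<theta>" unfolding \<theta>_def using e2[of x] e2[of y] h by simp
    have "mt A (t x) m = t (mt A x m)" "mt A (t y) m = t (mt A y m)" using tm by (simp_all add: tax)
    then show "(t x, t y) \<in> \<theta>" unfolding \<theta>_def using h by simp
  qed
  with assms have "\<theta> = Id \<or> \<theta> = UNIV" unfolding Ck_simple_def by auto
  then show "big_meet A (\<lambda>j. (t ^^ j) (delta A a)) k = bt A"
  proof
    assume "\<theta> = Id"
    moreover have "(m, tp A) \<in> \<theta>" unfolding \<theta>_def by (simp add: idem)
    ultimately have "mm a = tp A" unfolding m_def by auto
    with mm_top a show ?thesis by auto
  next
    assume "\<theta> = UNIV"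
    hence "(bt A, tp A) \<in> \<theta>" by auto
    hence "m = bt A" unfolding \<theta>_def by simp
    thus ?thesis unfolding m_def mm_def .
  qed
qed

lemma cong_ops:
  assumes c: "Ck_congruence A t \<theta>" and h: "(x, y) \<in> \<theta>"
  shows "(nabla A x, nabla A y) \<in> \<theta>" "(delta A x, delta A y) \<in> \<theta>" "((t^^j) x, (t^^j) y) \<in> \<theta>"
proof -
  have ng: "\<And>x y. (x,y) \<in> \<theta> \<Longrightarrow> (ng A x, ng A y) \<in> \<theta>"
   and pc: "\<And>x y. (x,y) \<in> \<theta> \<Longrightarrow> (pc A x, pc A y) \<in> \<theta>"
   and mt: "\<And>x y u v. (x,y) \<in> \<theta> \<Longrightarrow> (u,v) \<in> \<theta> \<Longrightarrow> (mt A x u, mt A y v) \<in> \<theta>"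
   and tt: "\<And>x y. (x,y) \<in> \<theta> \<Longrightarrow> (t x, t y) \<in> \<theta>"
    using c unfolding Ck_congruence_def by auto
  have nb: "\<And>x y. (x,y) \<in> \<theta> \<Longrightarrow> (nabla A x, nabla A y) \<in> \<theta>"
    unfolding nabla_def using ng pc mt by blast
  show "(nabla A x, nabla A y) \<in> \<theta>" using nb h .
  show "(delta A x, delta A y) \<in> \<theta>" unfolding delta_def using nb ng h by blast
  show "((t^^j) x, (t^^j) y) \<in> \<theta>" by (induction j) (auto simp: h tt)
qed

lemma two_one: assumes c2: cond2 and nt: "bt A \<noteq> tp A" shows "Ck_simple A t"
  unfolding Ck_simple_def
proof (intro conjI allI impI)
  show "\<exists>x y::'a. x \<noteq> y" using nt by auto
  fix \<theta> assume c: "Ck_congruence A t \<theta>"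
  have eq: "equiv UNIV \<theta>" using c unfolding Ck_congruence_def by auto
  have mt: "\<And>x y u v. (x,y) \<in> \<theta> \<Longrightarrow> (u,v) \<in> \<theta> \<Longrightarrow> (mt A x u, mt A y v) \<in> \<theta>"
   and jn: "\<And>x y u v. (x,y) \<in> \<theta> \<Longrightarrow> (u,v) \<in> \<theta> \<Longrightarrow> (jn A x u, jn A y v) \<in> \<theta>"
   and ng: "\<And>x y. (x,y) \<in> \<theta> \<Longrightarrow> (ng A x, ng A y) \<in> \<theta>"
    using c unfolding Ck_congruence_def by auto
  have refl: "(x, x) \<in> \<theta>" for x using eq unfolding equiv_def refl_on_def by auto
  have sym: "(x, y) \<in> \<theta> \<Longrightarrow> (y, x) \<in> \<theta>" for x y using eq unfolding equiv_def sym_def by auto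
  have trans: "(x, y) \<in> \<theta> \<Longrightarrow> (y, z) \<in> \<theta> \<Longrightarrow> (x, z) \<in> \<theta>" for x y z
    using eq unfolding equiv_def trans_def by blast
  show "\<theta> = Id \<or> \<theta> = UNIV"
  proof (cases "\<theta> \<subseteq> Id")
    case True
    then have "\<theta> = Id" using refl by auto
    then show ?thesis by simp
  next
    case False
    then obtain x y where xy: "(x, y) \<in> \<theta>" "x \<noteq> y" by auto
    define u where "u = mt A x y"
    define v where "v = jn A x y"
    have "(u, y) \<in> \<theta>" unfolding u_def using mt[OF xy(1) refl[of y]] by (simp add: idem)
    moreover have "(v, y) \<in> \<theta>" unfolding v_def using jn[OF xy(1) refl[of y]] by (simp add: L.sup.idem)
    ultimately have uv: "(u, v) \<in> \<theta>" using sym trans by blast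
    have luv: "leq A u v" unfolding u_def v_def using L.inf_le1 L.sup_ge1 L.order_trans by blast
    have "u \<noteq> v"
    proof
      assume "u = v"
      hence "leq A x u" "leq A y u" unfolding u_def v_def using L.sup_ge1 L.sup_ge2 by (metis)+
      hence "leq A x y" "leq A y x" unfolding u_def by (meson L.le_inf_iff)+
      thus False using xy(2) le_antisym by blast
    qed
    then have "delta A u \<noteq> delta A v \<or> nabla A u \<noteq> nabla A v" using determ luv by blast
    then obtain p q where pq: "bo p" "bo q" "leq A p q" "p \<noteq> q" "(p, q) \<in> \<theta>"
      using cong_ops(1,2)[OF c uv] delta_bo nabla_bo delta_mono[OF luv] nabla_mono[OF luv] by blast
    define e where "e = jn A p (ng A q)"
    have ene: "e \<noteq> tp A" unfolding e_def by (rule bo_sep[OF pq(1-4)])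
    have "(e, jn A q (ng A q)) \<in> \<theta>" unfolding e_def by (rule jn[OF pq(5) refl])
    hence et: "(e, tp A) \<in> \<theta>" using bo_jn_ng[OF pq(2)] by simp
    have dt: "delta A (tp A) = tp A" by (simp add: delta_eq)
    have jt: "((t^^j) (delta A e), tp A) \<in> \<theta>" for j
      using cong_ops(3)[OF c cong_ops(2)[OF c et], of j] dt tp_tp by simp
    have "(big_meet A (\<lambda>j. (t ^^ j) (delta A e)) n, tp A) \<in> \<theta>" for n
    proof (induction n)
      case 0 then show ?case using refl by simp
    next
      case (Suc n) then show ?case using mt[OF Suc jt[of "Suc n"]] by simp
    qed
    then have bt: "(bt A, tp A) \<in> \<theta>" using c2 ene unfolding cond2_def by metis
    have "(bt A, z) \<in> \<theta>" for z using mt[OF bt refl[of z]] by simp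
    then have "(w, z) \<in> \<theta>" for w z using sym trans by blast
    then show ?thesis by auto
  qed
qed

end

theorem theorem4p5:
  fixes A :: "'a mpm_ops" and t :: "'a \<Rightarrow> 'a" and k :: nat
  assumes "k \<ge> 1" and "Ck_alg k A t" and "bt A \<noteq> tp A"
  shows "(Ck_simple A t \<longleftrightarrow>
            (\<forall>a. a \<noteq> tp A \<longrightarrow> big_meet A (\<lambda>j. (t ^^ j) (delta A a)) k = bt A))
       \<and> ((\<forall>a. a \<noteq> tp A \<longrightarrow> big_meet A (\<lambda>j. (t ^^ j) (delta A a)) k = bt A)
            \<longleftrightarrow> K_set A t = {bt A, tp A})"
proof -
  have "mpM_alg A" using assms(2) unfolding Ck_alg_def by simp
  then have "ck A t k" using assms(2) unfolding ck_def ck_axioms_def mpm_def by simp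
  then interpret ck A t k .
  have "Ck_simple A t \<longleftrightarrow> cond2" using one_two two_one[OF _ assms(3)] by blast
  then show ?thesis using two_three unfolding cond2_def by simp
qed


end
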